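(* Let $K\ge2$, $r\in[0,1]^K$ with $r(1)>r(2)>\cdots>r(K)$, and fix $j\in\{2,\ldots,K\}$. Write $\varepsilon:=1-\pi(j)$. There exists $\bar\varepsilon>0$ such that on the sector $\mathcal S_{\bar\varepsilon}:=\{\pi:\ 0<\varepsilon<\bar\varepsilon,\ \pi(1)\ge\varepsilon/K\}$, along the EG flow: (1) $\frac{d}{dt}\log\frac{\pi(1)}{\pi(j)}\ge\frac{\Delta_{1j}}{4K}\varepsilon$; (2) $\dot\varepsilon>0$.
   Context: Softmax policy $\pi_\theta(a)=e^{\theta(a)}/\sum_{a'}e^{\theta(a')}$ with $\theta\in\mathbb{R}^K$; advantage $U(a):=r(a)-\pi_\theta^\top r$; $\Delta_{ab}:=r(a)-r(b)$. The EG flow is $\dot\theta(a)=\sum_{a'=1}^K\mathbf{1}\{U(a')>0\}\pi(a')U(a')(\mathbf{1}\{a=a'\}-\pi(a))$. *)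

theory Defs
  imports Complex_Main
begin

text \<open>Actions are indexed by 1..K; parameters and rewards are functions nat => real.\<close>

definition softmax :: "nat \<Rightarrow> (nat \<Rightarrow> real) \<Rightarrow> nat \<Rightarrow> real" where
  "softmax K \<theta> a = exp (\<theta> a) / (\<Sum>a'=1..K. exp (\<theta> a'))"

definition adv :: "nat \<Rightarrow> (nat \<Rightarrow> real) \<Rightarrow> (nat \<Rightarrow> real) \<Rightarrow> nat \<Rightarrow> real" where
  "adv K r \<theta> a = r a - (\<Sum>a'=1..K. softmax K \<theta> a' * r a')"

definition eg_field :: "nat \<Rightarrow> (nat \<Rightarrow> real) \<Rightarrow> (nat \<Rightarrow> real) \<Rightarrow> nat \<Rightarrow> real" where
  "eg_field K r \<theta> a = (\<Sum>a'=1..K. (if adv K r \<theta> a' > 0 then 1 else 0) * softmax K \<theta> a' * adv K r \<theta> a'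
       * ((if a = a' then 1 else 0) - softmax K \<theta> a))"

end

theory Submission
  imports Defs
begin


lemma key:
  fixes K j :: nat and r p U g :: "nat \<Rightarrow> real" and G eps :: real
  assumes K2: "K \<ge> 2"
    and r_range: "\<forall>a\<in>{1..K}. 0 \<le> r a \<and> r a \<le> 1"
    and r_strict: "\<forall>a b. 1 \<le> a \<longrightarrow> a < b \<longrightarrow> b \<le> K \<longrightarrow> r b < r a"
    and j_range: "j \<in> {2..K}"
    and p_pos: "\<forall>a\<in>{1..K}. p a > 0"
    and p_sum: "(\<Sum>a=1..K. p a) = 1"
    and U_def: "\<forall>a. U a = r a - (\<Sum>a'=1..K. p a' * r a')"
    and g_def: "\<forall>a. g a = (if U a > 0 then p a * U a else 0)"
    and G_def: "G = (\<Sum>a=1..K. g a)"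
    and eps_def: "eps = 1 - p j"
    and e0: "0 < eps" and e1: "eps \<le> 1/4" and e2: "eps \<le> (r 1 - r j) / (8 * real K)"
    and p1: "p 1 \<ge> eps / real K"
  shows "g 1 - g j - (p 1 - p j) * G \<ge> (r 1 - r j) / (4 * real K) * eps"
    and "g j - (\<Sum>a=1..K. p a * g a) + G * ((\<Sum>a=1..K. p a ^ 2) - p j) < 0"
proof -
  define A where "A = {1..K} - {j}"
  have jK: "j \<in> {1..K}" "j \<noteq> 1" using j_range by auto
  have oneK: "1 \<in> {1..K}" "1 \<in> A" using K2 jK by (auto simp: A_def)
  have fA: "finite A" by (simp add: A_def)
  have p_nn: "\<And>a. a \<in> {1..K} \<Longrightarrow> p a \<ge> 0" using p_pos by (simp add: less_imp_le)
  have split: "\<And>f. (\<Sum>a=1..K. f a) = f j + sum f A"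
    unfolding A_def using jK by (simp add: sum.remove)
  have epsA: "eps = sum p A" using split[of p] p_sum eps_def by simp
  have pA: "\<And>a. a \<in> A \<Longrightarrow> p a \<le> eps"
    unfolding epsA by (rule member_le_sum) (use p_pos in \<open>auto simp: A_def intro: less_imp_le\<close>)
  have pj: "p j = 1 - eps" using eps_def by simp
  have p1e: "p 1 \<le> eps" using pA oneK by simp
  define D where "D = r 1 - r j"
  have Dpos: "D > 0" using r_strict jK j_range unfolding D_def by auto
  have Kpos: "real K > 0" using K2 by simp
  have r1max: "\<And>a. a \<in> {1..K} \<Longrightarrow> r a \<le> r 1"
  proof -
    fix a assume "a \<in> {1..K}"
    then show "r a \<le> r 1" using r_strict by (cases "a = 1") (auto intro: less_imp_le)
  qed
  have U1: "U 1 = (\<Sum>a=1..K. p a * (r 1 - r a))"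
    using U_def p_sum by (simp add: right_diff_distrib sum_subtractf sum_distrib_right[symmetric])
  have U1ge: "U 1 \<ge> p j * D"
  proof -
    have "p j * (r 1 - r j) \<le> (\<Sum>a=1..K. p a * (r 1 - r a))"
      by (rule member_le_sum[OF jK(1)]) (use p_nn r1max in \<open>auto intro: mult_nonneg_nonneg\<close>)
    then show ?thesis using U1 D_def by simp
  qed
  have Uj: "U j = (\<Sum>a=1..K. p a * (r j - r a))"
    using U_def p_sum by (simp add: right_diff_distrib sum_subtractf sum_distrib_right[symmetric])
  have Ujle: "U j \<le> eps"
  proof -
    have "U j = (\<Sum>a\<in>A. p a * (r j - r a))" using Uj split[of "\<lambda>a. p a * (r j - r a)"] by simp
    also have "\<dots> \<le> (\<Sum>a\<in>A. p a)"
    proof (rule sum_mono)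
      fix a assume "a \<in> A"
      then have aK: "a \<in> {1..K}" by (simp add: A_def)
      have "p a > 0" using p_pos aK by simp
      moreover have "r j - r a \<le> 1" using r_range[rule_format, OF aK] r_range[rule_format, OF jK(1)] by simp
      ultimately
      show "p a * (r j - r a) \<le> p a" by (simp add: mult_left_le)
    qed
    finally show ?thesis using epsA by simp
  qed
  have g0: "\<And>a. a \<in> {1..K} \<Longrightarrow> g a \<ge> 0" using g_def p_nn by (auto intro: mult_nonneg_nonneg)
  have gj: "g j \<le> eps"
  proof (cases "U j > 0")
    case True
    have h: "p j * U j \<le> U j" using True pj e0 by (simp add: mult_left_le_one_le)
    have "g j = p j * U j" using True g_def by simp
    then show ?thesis using h Ujle by linarith
  qed (use g_def e0 in simp)
  have pjD: "p j * D > 0" using pj e1 Dpos by simp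
  have g1: "g 1 \<ge> (eps / real K) * ((1 - eps) * D)"
  proof -
    have "U 1 > 0" using U1ge pjD by simp
    then have "g 1 = p 1 * U 1" using g_def by simp
    moreover have "p 1 * U 1 \<ge> (eps / real K) * ((1 - eps) * D)"
      by (rule mult_mono) (use p1 U1ge pj pjD p_nn[OF oneK(1)] in auto)
    ultimately show ?thesis by simp
  qed
  have Gge: "G \<ge> g 1 + g j"
  proof -
    have "sum g {1, j} \<le> sum g {1..K}"
      by (rule sum_mono2) (use jK oneK g0 in auto)
    then show ?thesis using G_def jK by simp
  qed
  have pg: "(\<Sum>a=1..K. p a * g a) \<ge> p j * g j"
    by (rule member_le_sum[OF jK(1)]) (use p_nn g0 in \<open>auto intro: mult_nonneg_nonneg\<close>)
  have S2: "(\<Sum>a=1..K. p a ^ 2) \<le> p j ^ 2 + eps ^ 2"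
  proof -
    have "(\<Sum>a\<in>A. p a ^ 2) \<le> (\<Sum>a\<in>A. p a * eps)"
    proof (rule sum_mono)
      fix a assume "a \<in> A"
      then show "p a ^ 2 \<le> p a * eps" using pA p_pos by (auto simp: A_def power2_eq_square intro: mult_left_mono)
    qed
    also have "\<dots> = eps ^ 2" using epsA by (simp add: sum_distrib_right[symmetric] power2_eq_square)
    finally show ?thesis using split[of "\<lambda>a. p a ^ 2"] by simp
  qed
  define x where "x = g 1"
  define y where "y = g j"
  define L where "L = D / real K"
  have Lpos: "L > 0" using Dpos Kpos by (simp add: L_def)
  have e2': "eps \<le> L / 8" using e2 by (simp add: L_def D_def)
  have xge: "x \<ge> eps * (1 - eps) * L" using g1 by (simp add: x_def L_def)
  have y0: "y \<ge> 0" "y \<le> eps" using g0 jK gj by (auto simp: y_def)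
  have G0: "G \<ge> x + y" using Gge by (simp add: x_def y_def)
  show "g 1 - g j - (p 1 - p j) * G \<ge> (r 1 - r j) / (4 * real K) * eps"
  proof -
    have "(p j - p 1) * G \<ge> (p j - p 1) * (x + y)"
      by (rule mult_left_mono) (use G0 p1e pj e1 in auto)
    then have h1: "g 1 - g j - (p 1 - p j) * G \<ge> x * (1 + p j - p 1) - y * (1 - p j + p 1)"
      by (simp add: x_def y_def algebra_simps)
    have h2: "x * (1 + p j - p 1) \<ge> x * (2 - 2 * eps)"
      by (rule mult_left_mono) (use pj p1e xge e0 e1 Lpos in \<open>auto intro: order_trans[OF _ xge]\<close>)
    have h3: "y * (1 - p j + p 1) \<le> eps * (2 * eps)"
      by (rule mult_mono) (use y0 pj p1e e0 p_nn[OF oneK(1)] in auto)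
    have h4: "x * (2 - 2 * eps) \<ge> eps * (1 - eps) * L * (2 - 2 * eps)"
      by (rule mult_right_mono) (use xge e1 in auto)
    have h5a: "(3/4) * (3/4) \<le> (1 - eps) * (1 - eps)"
      by (rule mult_mono) (use e1 in auto)
    have h5: "(1 - eps) * (2 - 2 * eps) \<ge> 9 / 8" using h5a by (simp add: algebra_simps)
    have h6: "eps * (1 - eps) * L * (2 - 2 * eps) \<ge> eps * L * (9/8)"
      using mult_left_mono[OF h5, of "eps * L"] e0 Lpos by (simp add: algebra_simps)
    have h7: "eps * (2 * eps) \<le> eps * L / 4"
      using mult_left_mono[OF e2', of eps] e0 by simp
    have "(r 1 - r j) / (4 * real K) * eps = eps * L / 4" by (simp add: L_def D_def field_simps)
    moreover have "eps * L > 0" using e0 Lpos by simp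
    ultimately show ?thesis using h1 h2 h3 h4 h6 h7 by linarith
  qed
  show "g j - (\<Sum>a=1..K. p a * g a) + G * ((\<Sum>a=1..K. p a ^ 2) - p j) < 0"
  proof -
    have q1: "(\<Sum>a=1..K. p a ^ 2) - p j \<le> - (eps * (1 - 2 * eps))"
      using S2 pj by (simp add: power2_eq_square algebra_simps)
    have Gnn: "G \<ge> 0" using G0 y0 g0[OF oneK(1)] by (simp add: x_def)
    have q2: "G * ((\<Sum>a=1..K. p a ^ 2) - p j) \<le> - (eps * (1 - 2 * eps)) * (x + y)"
    proof -
      have "G * ((\<Sum>a=1..K. p a ^ 2) - p j) \<le> G * (- (eps * (1 - 2 * eps)))"
        by (rule mult_left_mono[OF q1 Gnn])
      also have "\<dots> \<le> - (eps * (1 - 2 * eps)) * (x + y)"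
        using mult_left_mono[OF G0, of "eps * (1 - 2 * eps)"] e0 e1 by (simp add: algebra_simps)
      finally show ?thesis .
    qed
    have q3: "g j - (\<Sum>a=1..K. p a * g a) \<le> eps * y"
      using pg pj by (simp add: y_def algebra_simps)
    have q4: "eps * (1 - 2 * eps) * y \<ge> 0" using e0 e1 y0 by simp
    have q5: "eps * (1 - 2 * eps) * x \<ge> eps * (1 - 2 * eps) * (eps * (1 - eps) * L)"
      by (rule mult_left_mono[OF xge]) (use e0 e1 in simp)
    have q6a: "(1/2) * (3/4) \<le> (1 - 2 * eps) * (1 - eps)"
      by (rule mult_mono) (use e1 in auto)
    have q6: "(1 - 2 * eps) * (1 - eps) \<ge> 3/8" using q6a by simp
    have q7: "eps * (1 - 2 * eps) * (eps * (1 - eps) * L) \<ge> eps * eps * L * (3/8)"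
      using mult_left_mono[OF q6, of "eps * eps * L"] e0 Lpos by (simp add: algebra_simps)
    have q8: "eps * y \<le> eps * eps" using y0 e0 by (simp add: mult_left_mono)
    have q9: "eps * eps \<le> eps * eps * L / 8 * 8 / L" using Lpos by simp
    have q10: "eps * eps \<le> eps * (L / 8)" using mult_left_mono[OF e2', of eps] e0 by simp
    have q11: "eps * eps * L * (3/8) > eps * (L/8) * (2 * eps)"
    proof -
      have "eps * eps * L > 0" using e0 Lpos by simp
      then show ?thesis by (simp add: algebra_simps)
    qed
    have a1: "eps * y \<le> eps * (L / 8)" using q8 q10 by simp
    have a2: "(2 * eps) * (eps * y) \<le> (2 * eps) * (eps * (L / 8))"
      by (rule mult_left_mono[OF a1]) (use e0 in simp)
    have a3: "eps * eps * L > 0" using e0 Lpos by simp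
    have "eps * y - eps * (1 - 2 * eps) * (x + y) < 0"
      using a2 q5 q7 a3 by (simp add: algebra_simps)
    then show ?thesis using q2 q3 by simp
  qed
qed


lemma eg_field_eq:
  assumes "a \<in> {1..K}"
  shows "eg_field K r \<theta> a = (if adv K r \<theta> a > 0 then softmax K \<theta> a * adv K r \<theta> a else 0)
     - softmax K \<theta> a * (\<Sum>a'=1..K. (if adv K r \<theta> a' > 0 then softmax K \<theta> a' * adv K r \<theta> a' else 0))"
proof -
  define c where "c a' = (if adv K r \<theta> a' > 0 then softmax K \<theta> a' * adv K r \<theta> a' else 0)" for a'
  have "eg_field K r \<theta> a = (\<Sum>a'=1..K. c a' * ((if a = a' then 1 else 0) - softmax K \<theta> a))"
    unfolding eg_field_def c_def by (rule sum.cong) auto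
  also have "\<dots> = (\<Sum>a'=1..K. (if a = a' then c a' else 0)) - (\<Sum>a'=1..K. c a') * softmax K \<theta> a"
  proof -
    have "(\<Sum>a'=1..K. c a' * ((if a = a' then 1 else 0) - softmax K \<theta> a))
        = (\<Sum>a'=1..K. (if a = a' then c a' else 0) - c a' * softmax K \<theta> a)"
      by (rule sum.cong) (auto simp: algebra_simps)
    then show ?thesis by (simp add: sum_subtractf sum_distrib_right)
  qed
  also have "\<dots> = c a - softmax K \<theta> a * (\<Sum>a'=1..K. c a')"
    using assms by (simp add: sum.delta)
  finally show ?thesis unfolding c_def .
qed

lemma softmax_pos: "K \<ge> 1 \<Longrightarrow> softmax K \<theta> a > 0"
  unfolding softmax_def by (intro divide_pos_pos) (auto intro!: sum_pos)

lemma softmax_sum: "K \<ge> 1 \<Longrightarrow> (\<Sum>a=1..K. softmax K \<theta> a) = 1"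
proof -
  assume "K \<ge> 1"
  then have "(\<Sum>a'=1..K. exp (\<theta> a')) > 0" by (intro sum_pos) auto
  then show ?thesis unfolding softmax_def by (simp add: sum_divide_distrib[symmetric])
qed

theorem lemma3:
  fixes K j :: nat and r :: "nat \<Rightarrow> real"
  assumes K2: "K \<ge> 2"
    and r_range: "\<forall>a\<in>{1..K}. 0 \<le> r a \<and> r a \<le> 1"
    and r_strict: "\<forall>a b. 1 \<le> a \<longrightarrow> a < b \<longrightarrow> b \<le> K \<longrightarrow> r b < r a"
    and j_range: "j \<in> {2..K}"
  shows "\<exists>\<epsilon>bar > 0. \<forall>(\<theta> :: real \<Rightarrow> nat \<Rightarrow> real) T.
     open T \<longrightarrow>
     (\<forall>t\<in>T. \<forall>a\<in>{1..K}. ((\<lambda>s. \<theta> s a) has_real_derivative eg_field K r (\<theta> t) a) (at t)) \<longrightarrow>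
     (\<forall>t\<in>T.
        (let \<epsilon> = 1 - softmax K (\<theta> t) j in
          0 < \<epsilon> \<and> \<epsilon> < \<epsilon>bar \<and> softmax K (\<theta> t) 1 \<ge> \<epsilon> / real K) \<longrightarrow>
        (\<exists>D. ((\<lambda>s. ln (softmax K (\<theta> s) 1 / softmax K (\<theta> s) j)) has_real_derivative D) (at t)
             \<and> D \<ge> (r 1 - r j) / (4 * real K) * (1 - softmax K (\<theta> t) j)) \<and>
        (\<exists>E. ((\<lambda>s. 1 - softmax K (\<theta> s) j) has_real_derivative E) (at t) \<and> E > 0))"
proof -
  have jK: "j \<in> {1..K}" "j \<noteq> 1" using j_range by auto
  have oneK: "1 \<in> {1..K}" using K2 by auto
  have K1: "K \<ge> 1" using K2 by simp
  have Dpos: "r 1 - r j > 0" using r_strict jK j_range by auto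
  define eb where "eb = min (1/4) ((r 1 - r j) / (8 * real K))"
  have ebpos: "eb > 0" using Dpos K2 by (simp add: eb_def)
  show ?thesis
  proof (rule exI[of _ eb], rule conjI[OF ebpos], intro allI impI ballI)
    fix \<theta> :: "real \<Rightarrow> nat \<Rightarrow> real" and T :: "real set" and t :: real
    assume "open T"
    assume deriv: "\<forall>t\<in>T. \<forall>a\<in>{1..K}. ((\<lambda>s. \<theta> s a) has_real_derivative eg_field K r (\<theta> t) a) (at t)"
    assume tT: "t \<in> T"
    assume sect: "let \<epsilon> = 1 - softmax K (\<theta> t) j in
          0 < \<epsilon> \<and> \<epsilon> < eb \<and> softmax K (\<theta> t) 1 \<ge> \<epsilon> / real K"
    define p where "p = softmax K (\<theta> t)"
    define U where "U = adv K r (\<theta> t)"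
    define g where "g a = (if U a > 0 then p a * U a else 0)" for a
    define G where "G = (\<Sum>a=1..K. g a)"
    define eps where "eps = 1 - p j"
    define v where "v a = eg_field K r (\<theta> t) a" for a
    have dv: "\<And>a. a \<in> {1..K} \<Longrightarrow> ((\<lambda>s. \<theta> s a) has_real_derivative v a) (at t)"
      using deriv tT by (simp add: v_def)
    have v_eq: "\<And>a. a \<in> {1..K} \<Longrightarrow> v a = g a - p a * G"
      unfolding v_def g_def G_def p_def U_def by (rule eg_field_eq)
    have e0: "0 < eps" and eb': "eps < eb" and p1: "p 1 \<ge> eps / real K"
      using sect by (simp_all add: Let_def eps_def p_def)
    have e1: "eps \<le> 1/4" and e2: "eps \<le> (r 1 - r j) / (8 * real K)"
      using eb' by (simp_all add: eb_def)
    have p_pos: "\<forall>a\<in>{1..K}. p a > 0" using softmax_pos[OF K1] by (simp add: p_def)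
    have p_sum: "(\<Sum>a=1..K. p a) = 1" using softmax_sum[OF K1] by (simp add: p_def)
    have U_def': "\<forall>a. U a = r a - (\<Sum>a'=1..K. p a' * r a')"
      by (simp add: U_def adv_def p_def)
    note k = key[OF K2 r_range r_strict j_range p_pos p_sum U_def' _ G_def eps_def e0 e1 e2 p1]
    have k1: "g 1 - g j - (p 1 - p j) * G \<ge> (r 1 - r j) / (4 * real K) * eps"
      by (rule k(1)) (simp add: g_def)
    have k2: "g j - (\<Sum>a=1..K. p a * g a) + G * ((\<Sum>a=1..K. p a ^ 2) - p j) < 0"
      by (rule k(2)) (simp add: g_def)
    show "(\<exists>D. ((\<lambda>s. ln (softmax K (\<theta> s) 1 / softmax K (\<theta> s) j)) has_real_derivative D) (at t)
             \<and> D \<ge> (r 1 - r j) / (4 * real K) * (1 - softmax K (\<theta> t) j)) \<and>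
        (\<exists>E. ((\<lambda>s. 1 - softmax K (\<theta> s) j) has_real_derivative E) (at t) \<and> E > 0)"
    proof (intro conjI)
      have fe: "(\<lambda>s. ln (softmax K (\<theta> s) 1 / softmax K (\<theta> s) j)) = (\<lambda>s. \<theta> s 1 - \<theta> s j)"
      proof
        fix s
        have Z: "(\<Sum>a'=1..K. exp (\<theta> s a')) > 0" using K1 by (intro sum_pos) auto
        show "ln (softmax K (\<theta> s) 1 / softmax K (\<theta> s) j) = \<theta> s 1 - \<theta> s j"
          using Z by (simp add: softmax_def exp_diff[symmetric])
      qed
      have "((\<lambda>s. \<theta> s 1 - \<theta> s j) has_real_derivative v 1 - v j) (at t)"
        by (intro DERIV_diff dv oneK jK)
      moreover have "v 1 - v j = g 1 - g j - (p 1 - p j) * G"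
        using v_eq oneK jK by (simp add: algebra_simps)
      ultimately show "\<exists>D. ((\<lambda>s. ln (softmax K (\<theta> s) 1 / softmax K (\<theta> s) j)) has_real_derivative D) (at t)
             \<and> D \<ge> (r 1 - r j) / (4 * real K) * (1 - softmax K (\<theta> t) j)"
        using k1 fe by (auto simp: eps_def p_def)
    next
      define Z where "Z = (\<Sum>a'=1..K. exp (\<theta> t a'))"
      have Zpos: "Z > 0" unfolding Z_def using K1 by (intro sum_pos) auto
      have pa: "\<And>a. p a = exp (\<theta> t a) / Z" by (simp add: p_def softmax_def Z_def)
      have dZ: "((\<lambda>s. \<Sum>a'=1..K. exp (\<theta> s a')) has_real_derivative (\<Sum>a'=1..K. exp (\<theta> t a') * v a')) (at t)"
        by (intro DERIV_sum DERIV_fun_exp dv) simp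
      have de: "((\<lambda>s. exp (\<theta> s j)) has_real_derivative exp (\<theta> t j) * v j) (at t)"
        by (intro DERIV_fun_exp dv jK)
      have dq: "((\<lambda>s. 1 - softmax K (\<theta> s) j) has_real_derivative
          0 - (exp (\<theta> t j) * v j * Z - exp (\<theta> t j) * (\<Sum>a'=1..K. exp (\<theta> t a') * v a')) / (Z * Z)) (at t)"
        unfolding softmax_def Z_def by (intro DERIV_diff DERIV_const DERIV_divide de dZ) (use Zpos Z_def in simp)
      have sumv: "(\<Sum>a'=1..K. exp (\<theta> t a') * v a') = Z * (\<Sum>a=1..K. p a * v a)"
        by (simp add: pa sum_distrib_left) (use Zpos in simp)
      have val: "0 - (exp (\<theta> t j) * v j * Z - exp (\<theta> t j) * (\<Sum>a'=1..K. exp (\<theta> t a') * v a')) / (Z * Z)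
          = - p j * (v j - (\<Sum>a=1..K. p a * v a))"
        unfolding sumv using Zpos by (simp add: pa field_simps)
      have sv: "(\<Sum>a=1..K. p a * v a) = (\<Sum>a=1..K. p a * g a) - G * (\<Sum>a=1..K. p a ^ 2)"
      proof -
        have "(\<Sum>a=1..K. p a * v a) = (\<Sum>a=1..K. p a * g a - G * p a ^ 2)"
          by (rule sum.cong) (auto simp: v_eq power2_eq_square algebra_simps)
        then show ?thesis by (simp add: sum_subtractf sum_distrib_left)
      qed
      have "- p j * (v j - (\<Sum>a=1..K. p a * v a))
          = - p j * (g j - (\<Sum>a=1..K. p a * g a) + G * ((\<Sum>a=1..K. p a ^ 2) - p j))"
        unfolding sv v_eq[OF jK(1)] by algebra
      moreover have "\<dots> > 0" using k2 p_pos jK(1) by (simp add: mult_pos_neg)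
      ultimately show "\<exists>E. ((\<lambda>s. 1 - softmax K (\<theta> s) j) has_real_derivative E) (at t) \<and> E > 0"
        using dq val by auto
    qed
  qed
qed

end
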